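(* Consider SEG: $X_{t+1/2}=X_t-\gamma F_t$, $X_{t+1}=X_t-\alpha\gamma F_{t+1/2}$, where $F_t=F(X_t)+U_t(X_t)$ and $F_{t+1/2}=F(X_{t+1/2})+U_{t+1/2}(X_{t+1/2})$. Let $F:\mathbb{R}^d\to\mathbb{R}^d$ be $L$-Lipschitz, let $x^*\in X^*=\{x:F(x)=0\}$ satisfy $\langle F(x),x-x^*\rangle\ge\mu\|x-x^*\|^2-\lambda$ for all $x$ (with $\lambda\ge0,\mu>0$), and assume the stochastic oracle assumptions of the context. Let $Z_t=F_{t+1/2}$ and $\mathrm{drift}_t=\gamma\,\mathbb{E}[\langle Z_t,X_t-x^*\rangle\mid\mathcal{F}_t]$. If $0<\gamma<\frac1{2\mu+\sqrt3L}$, then $$-\mathrm{drift}_t\le-\frac{\mu\gamma}{2}\|X_t-x^*\|^2+(\gamma\lambda+3\gamma^2\sigma^2).$$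
   Context: Stochastic oracle: noise fields are i.i.d. random fields; filtration $(\mathcal{F}_t)$ (history of the iterates) with $\mathcal{F}_{t+1/2}=\mathcal{F}_t$; $U_t(X_t)$ is $\mathcal{F}_{t+1}$- but not $\mathcal{F}_t$-measurable; $\mathbb{E}[U_t(x)\mid\mathcal{F}_t]=0$ and $\mathbb{E}[\|U_t(x)\|^2\mid\mathcal{F}_t]\le\sigma^2$ for all $x$ (and likewise for $U_{t+1/2}$). *)

theory Defs
  imports "HOL-Probability.Probability"
begin

definition seg_half :: "('v::real_vector \<Rightarrow> 'v) \<Rightarrow> real \<Rightarrow> 'v \<Rightarrow> 'v \<Rightarrow> 'v" where
  "seg_half F \<gamma> x u = x - \<gamma> *\<^sub>R (F x + u)"

end

theory Submission
  imports Defs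
begin

lemma nsq_diff: fixes a b :: "'v::real_inner" shows "(norm (a - b))\<^sup>2 = (norm a)\<^sup>2 - 2 * inner a b + (norm b)\<^sup>2"
  unfolding power2_norm_eq_inner by (simp add: inner_diff_left inner_diff_right inner_commute[of b a])
lemma nsq_add: fixes a b :: "'v::real_inner" shows "(norm (a + b))\<^sup>2 = (norm a)\<^sup>2 + 2 * inner a b + (norm b)\<^sup>2"
  unfolding power2_norm_eq_inner by (simp add: inner_add_left inner_add_right inner_commute[of b a])

lemma pointwise:
  fixes F :: "'v::euclidean_space \<Rightarrow> 'v" and x xs u :: 'v
  assumes lip: "L-lipschitz_on UNIV F"
    and weak_mon: "\<forall>y. inner (F y) (y - xs) \<ge> \<mu> * (norm (y - xs))\<^sup>2 - lam"
    and gam_pos: "0 < \<gamma>"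
  shows "inner (F (seg_half F \<gamma> x u)) (x - xs) \<ge>
     \<mu> * (norm (x-xs))\<^sup>2 - 2*\<mu>*\<gamma>*inner (x-xs) (F x) + (\<mu>-L)*\<gamma>\<^sup>2*(norm (F x))\<^sup>2 - lam + \<gamma>*(norm (F x))\<^sup>2
     + inner (-(2*\<mu>*\<gamma>) *\<^sub>R (x-xs) + (2*(\<mu>-L)*\<gamma>\<^sup>2 + \<gamma>) *\<^sub>R F x) u + (\<mu>-L)*\<gamma>\<^sup>2*(norm u)\<^sup>2"
proof -
  define g where "g = F x + u"
  define y where "y = x - \<gamma> *\<^sub>R g"
  have yd: "seg_half F \<gamma> x u = y" by (simp add: seg_half_def y_def g_def)
  have e: "x - xs = (y - xs) + \<gamma> *\<^sub>R g" by (simp add: y_def)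
  have 1: "inner (F y) (x - xs) = inner (F y) (y - xs) + \<gamma> * inner (F y) g"
    by (subst e) (simp add: inner_add_right)
  have 2: "inner (F y) (y - xs) \<ge> \<mu> * (norm (y - xs))\<^sup>2 - lam" using weak_mon by blast
  have L0: "L \<ge> 0" using lipschitz_on_nonneg[OF lip] .
  have dF: "norm (F y - F x) \<le> L * (\<gamma> * norm g)"
    using lipschitz_onD[OF lip, of y x] gam_pos by (simp add: dist_norm y_def)
  have "inner (F y - F x) g \<ge> - (L * (\<gamma> * norm g)) * norm g"
  proof -
    have "\<bar>inner (F y - F x) g\<bar> \<le> norm (F y - F x) * norm g" by (rule Cauchy_Schwarz_ineq2)
    also have "\<dots> \<le> L * (\<gamma> * norm g) * norm g" by (rule mult_right_mono[OF dF]) simp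
    finally show ?thesis by (simp add: abs_le_iff)
  qed
  hence 3: "inner (F y) g \<ge> inner (F x) g - L * \<gamma> * (norm g)\<^sup>2"
    by (simp add: inner_diff_left power2_eq_square algebra_simps)
  have yx: "y - xs = (x - xs) - \<gamma> *\<^sub>R g" by (simp add: y_def)
  have 4: "(norm (y - xs))\<^sup>2 = (norm (x-xs))\<^sup>2 - 2*\<gamma>*inner (x-xs) g + \<gamma>\<^sup>2 * (norm g)\<^sup>2"
    unfolding yx nsq_diff by (simp add: power2_eq_square)
  have 5: "(norm g)\<^sup>2 = (norm (F x))\<^sup>2 + 2 * inner (F x) u + (norm u)\<^sup>2"
    unfolding g_def nsq_add ..
  have 6: "inner (x-xs) g = inner (x-xs) (F x) + inner (x-xs) u" by (simp add: g_def inner_add_right)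
  have 7: "inner (F x) g = (norm (F x))\<^sup>2 + inner (F x) u" by (simp add: g_def inner_add_right power2_norm_eq_inner)
  have 8: "inner (-(2*\<mu>*\<gamma>) *\<^sub>R (x-xs) + (2*(\<mu>-L)*\<gamma>\<^sup>2 + \<gamma>) *\<^sub>R F x) u
     = -(2*\<mu>*\<gamma>) * inner (x-xs) u + (2*(\<mu>-L)*\<gamma>\<^sup>2 + \<gamma>) * inner (F x) u"
    by (simp only: inner_add_left inner_scaleR_left)
  have 9: "\<gamma> * inner (F y) g \<ge> \<gamma> * (inner (F x) g - L * \<gamma> * (norm g)\<^sup>2)"
    using mult_left_mono[OF 3] gam_pos by simp
  have "inner (F y) (x - xs) \<ge> \<mu> * ((norm (x-xs))\<^sup>2 - 2*\<gamma>*inner (x-xs) g + \<gamma>\<^sup>2 * (norm g)\<^sup>2) - lam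
      + \<gamma> * (inner (F x) g - L * \<gamma> * (norm g)\<^sup>2)"
    using 1 2[unfolded 4] 9 by linarith
  then show ?thesis unfolding yd 8 5 6 7
    by (simp add: algebra_simps power2_eq_square)
qed

lemma scalar_final:
  fixes a f p s \<gamma> \<mu> L lam \<sigma> :: real
  assumes a: "a \<ge> 0" and f: "f \<ge> 0" and p: "p \<le> a * f" and s0: "0 \<le> s" and s1: "s \<le> \<sigma>\<^sup>2"
    and g: "\<gamma> > 0" and mu: "\<mu> > 0" and L: "L \<ge> 0" and gl: "\<gamma> * (\<mu> + L) \<le> 1"
  shows "- (\<gamma> * (\<mu> * a\<^sup>2 - 2*\<mu>*\<gamma>*p + (\<mu>-L)*\<gamma>\<^sup>2*f\<^sup>2 - lam + \<gamma>*f\<^sup>2 + (\<mu>-L)*\<gamma>\<^sup>2  * s))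
     \<le> - (\<mu> * \<gamma> / 2) * a\<^sup>2 + (\<gamma> * lam + 3 * \<gamma>\<^sup>2 * \<sigma>\<^sup>2)"
proof -
  have Lg: "L * \<gamma> \<le> 1" using gl g mu by (smt (verit) mult_nonneg_nonneg distrib_left mult.commute)
  have t1: "(\<mu>-L)*\<gamma>\<^sup>2 * s \<ge> - (3 * \<gamma> * \<sigma>\<^sup>2)"
  proof -
    have "(\<mu>-L)*\<gamma>\<^sup>2 * s \<ge> -L*\<gamma>\<^sup>2 * s" proof -
      have "\<mu>*\<gamma>\<^sup>2 * s \<ge> 0" using mu g s0 by simp
      thus ?thesis by (simp add: algebra_simps)
    qed
    moreover have "L*\<gamma>\<^sup>2 * s \<le> 3*\<gamma>*\<sigma>\<^sup>2"
    proof -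
      have "L*\<gamma>\<^sup>2 * s = \<gamma> * ((L*\<gamma>)  * s)" by (simp add: power2_eq_square)
      also have "\<dots> \<le> \<gamma> * (1 * \<sigma>\<^sup>2)"
        using g Lg s0 s1 by (intro mult_left_mono mult_mono) auto
      also have "\<dots> \<le> 3*\<gamma>*\<sigma>\<^sup>2" using g by simp
      finally show ?thesis .
    qed
    ultimately show ?thesis by linarith
  qed
  have t2: "2*\<mu>*\<gamma>*p \<le> 2*\<mu>*\<gamma>*(a*f)" using p mu g by simp
  have t3: "\<gamma> * (1 + (\<mu>-L)*\<gamma>) \<ge> 2*\<mu>*\<gamma>\<^sup>2"
  proof -
    have "\<gamma> * (\<gamma> * (\<mu> + L)) \<le> \<gamma> * 1" using gl g by (intro mult_left_mono) auto
    thus ?thesis by (simp add: power2_eq_square algebra_simps)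
  qed
  have t4: "\<gamma> * (1 + (\<mu>-L)*\<gamma>) * f\<^sup>2 \<ge> 2*\<mu>*\<gamma>\<^sup>2 * f\<^sup>2"
    using mult_right_mono[OF t3, of "f\<^sup>2"] by simp
  have t5: "(\<mu>/2) * (a - 2*\<gamma>*f)\<^sup>2 \<ge> 0" using mu by simp
  have "\<mu> * a\<^sup>2 - 2*\<mu>*\<gamma>*p + (\<mu>-L)*\<gamma>\<^sup>2*f\<^sup>2 + \<gamma>*f\<^sup>2 \<ge> (\<mu>/2) * a\<^sup>2"
    using t2 t4 t5 by (simp add: power2_eq_square algebra_simps)
  hence "\<mu> * a\<^sup>2 - 2*\<mu>*\<gamma>*p + (\<mu>-L)*\<gamma>\<^sup>2*f\<^sup>2 - lam + \<gamma>*f\<^sup>2 + (\<mu>-L)*\<gamma>\<^sup>2 * s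
      \<ge> (\<mu>/2) * a\<^sup>2 - lam - 3 * \<gamma> * \<sigma>\<^sup>2" using t1 by linarith
  from mult_left_mono[OF this, of \<gamma>] g
  show ?thesis by (simp add: algebra_simps power2_eq_square)
qed

theorem propositionB2:
  fixes F :: "'v::euclidean_space \<Rightarrow> 'v"
    and L \<mu> lam \<gamma> \<sigma> :: real
    and xs x :: 'v
    and M1 :: "'a measure" and M2 :: "'b measure"
    and U1 :: "'a \<Rightarrow> 'v \<Rightarrow> 'v" and U2 :: "'b \<Rightarrow> 'v \<Rightarrow> 'v"
  assumes lip: "L-lipschitz_on UNIV F"
    and sol: "F xs = 0"
    and weak_mon: "\<forall>y. inner (F y) (y - xs) \<ge> \<mu> * (norm (y - xs))\<^sup>2 - lam"
    and lam_nn: "lam \<ge> 0" and mu: "\<mu> > 0"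
    and P1: "prob_space M1" and P2: "prob_space M2"
    and U1_meas: "(\<lambda>(\<omega>, y). U1 \<omega> y) \<in> borel_measurable (M1 \<Otimes>\<^sub>M borel)"
    and U2_meas: "(\<lambda>(\<omega>, y). U2 \<omega> y) \<in> borel_measurable (M2 \<Otimes>\<^sub>M borel)"
    and U1_int: "\<forall>y. integrable M1 (\<lambda>\<omega>. U1 \<omega> y)"
    and U1_mean: "\<forall>y. (\<integral>\<omega>. U1 \<omega> y \<partial>M1) = 0"
    and U1_sq_int: "\<forall>y. integrable M1 (\<lambda>\<omega>. (norm (U1 \<omega> y))\<^sup>2)"
    and U1_var: "\<forall>y. (\<integral>\<omega>. (norm (U1 \<omega> y))\<^sup>2 \<partial>M1) \<le> \<sigma>\<^sup>2"
    and U2_int: "\<forall>y. integrable M2 (\<lambda>\<omega>. U2 \<omega> y)"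
    and U2_mean: "\<forall>y. (\<integral>\<omega>. U2 \<omega> y \<partial>M2) = 0"
    and U2_sq_int: "\<forall>y. integrable M2 (\<lambda>\<omega>. (norm (U2 \<omega> y))\<^sup>2)"
    and U2_var: "\<forall>y. (\<integral>\<omega>. (norm (U2 \<omega> y))\<^sup>2 \<partial>M2) \<le> \<sigma>\<^sup>2"
    and gam_pos: "0 < \<gamma>"
    and gam_small: "\<gamma> < 1 / (2 * \<mu> + sqrt 3 * L)"
  shows "- (\<gamma> * (\<integral>\<omega>. (case \<omega> of (\<omega>1, \<omega>2) \<Rightarrow>
              inner (F (seg_half F \<gamma> x (U1 \<omega>1 x)) + U2 \<omega>2 (seg_half F \<gamma> x (U1 \<omega>1 x))) (x - xs))
            \<partial>(M1 \<Otimes>\<^sub>M M2)))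
         \<le> - (\<mu> * \<gamma> / 2) * (norm (x - xs))\<^sup>2 + (\<gamma> * lam + 3 * \<gamma>\<^sup>2 * \<sigma>\<^sup>2)"
proof -
  interpret M1: prob_space M1 by (rule P1)
  interpret M2: prob_space M2 by (rule P2)
  interpret P: pair_prob_space M1 M2 by unfold_locales
  note U1_meas[measurable] U2_meas[measurable]
  define e where "e = x - xs"
  define Y where "Y = (\<lambda>\<omega>. seg_half F \<gamma> x (U1 \<omega> x))"
  have L0: "L \<ge> 0" using lipschitz_on_nonneg[OF lip] .
  have Fm[measurable]: "F \<in> borel_measurable borel"
    by (rule borel_measurable_continuous_onI[OF lipschitz_on_continuous_on[OF lip]])
  have u1m[measurable]: "(\<lambda>\<omega>. U1 \<omega> x) \<in> borel_measurable M1"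
  proof -
    have "(\<lambda>\<omega>. (\<lambda>(\<omega>, y). U1 \<omega> y) (\<omega>, x)) \<in> borel_measurable M1"
      by (rule measurable_compose[OF _ U1_meas]) measurable
    thus ?thesis by simp
  qed
  have Ym[measurable]: "Y \<in> borel_measurable M1"
    unfolding Y_def seg_half_def by measurable
  have u2m[measurable]: "(\<lambda>p. U2 (snd p) (Y (fst p))) \<in> borel_measurable (M1 \<Otimes>\<^sub>M M2)"
  proof -
    have "(\<lambda>p. (\<lambda>(\<omega>, y). U2 \<omega> y) (snd p, Y (fst p))) \<in> borel_measurable (M1 \<Otimes>\<^sub>M M2)"
      by (rule measurable_compose[OF _ U2_meas]) measurable
    thus ?thesis by simp
  qed
  define h where "h = (\<lambda>\<omega>. (case \<omega> of (\<omega>1, \<omega>2) \<Rightarrow>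
              inner (F (seg_half F \<gamma> x (U1 \<omega>1 x)) + U2 \<omega>2 (seg_half F \<gamma> x (U1 \<omega>1 x))) (x - xs)))"
  have h_eq: "h = (\<lambda>p. inner (F (Y (fst p))) e + inner (U2 (snd p) (Y (fst p))) e)"
    by (auto simp: h_def Y_def e_def inner_add_left fun_eq_iff)
  have hm[measurable]: "h \<in> borel_measurable (M1 \<Otimes>\<^sub>M M2)"
    unfolding h_eq by measurable
  have normFY: "norm (F (Y \<omega>)) \<le> norm (F x) + L * \<gamma> * (norm (F x) + norm (U1 \<omega> x))" for \<omega>
  proof -
    have "norm (F (Y \<omega>) - F x) \<le> L * norm (Y \<omega> - x)"
      using lipschitz_onD[OF lip, of "Y \<omega>" x] by (simp add: dist_norm)
    also have "norm (Y \<omega> - x) = \<gamma> * norm (F x + U1 \<omega> x)"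
      using gam_pos by (simp add: Y_def seg_half_def)
    also have "L * (\<gamma> * norm (F x + U1 \<omega> x)) \<le> L * (\<gamma> * (norm (F x) + norm (U1 \<omega> x)))"
      using L0 gam_pos by (intro mult_left_mono norm_triangle_ineq) auto
    finally have "norm (F (Y \<omega>) - F x) \<le> L * \<gamma> * (norm (F x) + norm (U1 \<omega> x))" by simp
    moreover have "norm (F (Y \<omega>)) \<le> norm (F (Y \<omega>) - F x) + norm (F x)"
      using norm_triangle_sub[of "F (Y \<omega>)" "F x"] by simp
    ultimately show ?thesis by linarith
  qed
  have int1: "integrable M1 (\<lambda>\<omega>. inner (F (Y \<omega>)) e)"
  proof (rule Bochner_Integration.integrable_bound)
    show "integrable M1 (\<lambda>\<omega>. norm e * (norm (F x) + L * \<gamma> * (norm (F x) + norm (U1 \<omega> x))))"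
      using U1_int by auto
    show "(\<lambda>\<omega>. inner (F (Y \<omega>)) e) \<in> borel_measurable M1" by measurable
    show "AE \<omega> in M1. norm (inner (F (Y \<omega>)) e) \<le> norm (norm e * (norm (F x) + L * \<gamma> * (norm (F x) + norm (U1 \<omega> x))))"
    proof (rule AE_I2)
      fix \<omega>
      have "norm (inner (F (Y \<omega>)) e) \<le> norm (F (Y \<omega>)) * norm e"
        using Cauchy_Schwarz_ineq2 by simp
      also have "\<dots> \<le> (norm (F x) + L * \<gamma> * (norm (F x) + norm (U1 \<omega> x))) * norm e"
        by (rule mult_right_mono[OF normFY]) simp
      also have "\<dots> \<le> norm (norm e * (norm (F x) + L * \<gamma> * (norm (F x) + norm (U1 \<omega> x))))"
        using L0 gam_pos by (simp add: mult.commute)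
      finally show "norm (inner (F (Y \<omega>)) e) \<le> norm (norm e * (norm (F x) + L * \<gamma> * (norm (F x) + norm (U1 \<omega> x))))" .
    qed
  qed
  have U2_abs: "(\<integral>\<omega>. norm (U2 \<omega> y) \<partial>M2) \<le> (1 + \<sigma>\<^sup>2) / 2" for y
  proof -
    have "(\<integral>\<omega>. norm (U2 \<omega> y) \<partial>M2) \<le> (\<integral>\<omega>. (1 + (norm (U2 \<omega> y))\<^sup>2) / 2 \<partial>M2)"
    proof (rule integral_mono)
      show "integrable M2 (\<lambda>\<omega>. norm (U2 \<omega> y))" using U2_int by auto
      show "integrable M2 (\<lambda>\<omega>. (1 + (norm (U2 \<omega> y))\<^sup>2) / 2)" using U2_sq_int by auto
      fix \<omega>
      have "0 \<le> (norm (U2 \<omega> y) - 1)\<^sup>2" by simp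
      thus "norm (U2 \<omega> y) \<le> (1 + (norm (U2 \<omega> y))\<^sup>2) / 2" by (simp add: power2_eq_square algebra_simps)
    qed
    also have "\<dots> = (1 + (\<integral>\<omega>. (norm (U2 \<omega> y))\<^sup>2 \<partial>M2)) / 2"
      using U2_sq_int by (simp add: M2.prob_space)
    also have "\<dots> \<le> (1 + \<sigma>\<^sup>2) / 2" using U2_var by simp
    finally show ?thesis .
  qed
  have inner_int: "(\<integral>\<omega>2. h (\<omega>1, \<omega>2) \<partial>M2) = inner (F (Y \<omega>1)) e" for \<omega>1
  proof -
    have "(\<integral>\<omega>2. h (\<omega>1, \<omega>2) \<partial>M2) = (\<integral>\<omega>2. inner (F (Y \<omega>1)) e + inner (U2 \<omega>2 (Y \<omega>1)) e \<partial>M2)"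
      by (simp add: h_eq)
    also have "\<dots> = inner (F (Y \<omega>1)) e + inner (\<integral>\<omega>2. U2 \<omega>2 (Y \<omega>1) \<partial>M2) e"
      using U2_int by (simp add: M2.prob_space)
    also have "\<dots> = inner (F (Y \<omega>1)) e" using U2_mean by simp
    finally show ?thesis .
  qed
  have hint: "integrable (M1 \<Otimes>\<^sub>M M2) h"
  proof (rule P.Fubini_integrable[OF hm])
    show "AE \<omega>1 in M1. integrable M2 (\<lambda>\<omega>2. h (\<omega>1, \<omega>2))"
      using U2_int by (simp add: h_eq)
    show "integrable M1 (\<lambda>\<omega>1. \<integral>\<omega>2. norm (h (\<omega>1, \<omega>2)) \<partial>M2)"
    proof (rule Bochner_Integration.integrable_bound)
      show "integrable M1 (\<lambda>\<omega>1. \<bar>inner (F (Y \<omega>1)) e\<bar> + norm e * ((1 + \<sigma>\<^sup>2) / 2))"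
        using int1 by auto
      show "(\<lambda>\<omega>1. \<integral>\<omega>2. norm (h (\<omega>1, \<omega>2)) \<partial>M2) \<in> borel_measurable M1"
        by measurable
      show "AE \<omega>1 in M1. norm (\<integral>\<omega>2. norm (h (\<omega>1, \<omega>2)) \<partial>M2) \<le> norm (\<bar>inner (F (Y \<omega>1)) e\<bar> + norm e * ((1 + \<sigma>\<^sup>2) / 2))"
      proof (rule AE_I2)
        fix \<omega>1
        have "(\<integral>\<omega>2. norm (h (\<omega>1, \<omega>2)) \<partial>M2) \<le> (\<integral>\<omega>2. \<bar>inner (F (Y \<omega>1)) e\<bar> + norm e * norm (U2 \<omega>2 (Y \<omega>1)) \<partial>M2)"
        proof (rule integral_mono)
          show "integrable M2 (\<lambda>\<omega>2. norm (h (\<omega>1, \<omega>2)))" using U2_int by (simp add: h_eq)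
          show "integrable M2 (\<lambda>\<omega>2. \<bar>inner (F (Y \<omega>1)) e\<bar> + norm e * norm (U2 \<omega>2 (Y \<omega>1)))"
            using U2_int by auto
          fix \<omega>2
          have "\<bar>inner (U2 \<omega>2 (Y \<omega>1)) e\<bar> \<le> norm (U2 \<omega>2 (Y \<omega>1)) * norm e" by (rule Cauchy_Schwarz_ineq2)
          thus "norm (h (\<omega>1, \<omega>2)) \<le> \<bar>inner (F (Y \<omega>1)) e\<bar> + norm e * norm (U2 \<omega>2 (Y \<omega>1))"
            by (simp add: h_eq mult.commute)
        qed
        also have "\<dots> = \<bar>inner (F (Y \<omega>1)) e\<bar> + norm e * (\<integral>\<omega>2. norm (U2 \<omega>2 (Y \<omega>1)) \<partial>M2)"
          using U2_int by (simp add: M2.prob_space)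
        also have "\<dots> \<le> \<bar>inner (F (Y \<omega>1)) e\<bar> + norm e * ((1 + \<sigma>\<^sup>2) / 2)"
          using mult_left_mono[OF U2_abs[of "Y \<omega>1"], of "norm e"] by simp
        finally show "norm (\<integral>\<omega>2. norm (h (\<omega>1, \<omega>2)) \<partial>M2) \<le> norm (\<bar>inner (F (Y \<omega>1)) e\<bar> + norm e * ((1 + \<sigma>\<^sup>2) / 2))"
          by simp
      qed
    qed
  qed
  have main_eq: "integral\<^sup>L (M1 \<Otimes>\<^sub>M M2) h = (\<integral>\<omega>1. inner (F (Y \<omega>1)) e \<partial>M1)"
    using P.integral_fst'[OF hint] inner_int by simp
  define C where "C = \<mu> * (norm e)\<^sup>2 - 2*\<mu>*\<gamma>*inner e (F x) + (\<mu>-L)*\<gamma>\<^sup>2*(norm (F x))\<^sup>2 - lam + \<gamma>*(norm (F x))\<^sup>2"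
  define w where "w = -(2*\<mu>*\<gamma>) *\<^sub>R e + (2*(\<mu>-L)*\<gamma>\<^sup>2 + \<gamma>) *\<^sub>R F x"
  define s where "s = (\<integral>\<omega>. (norm (U1 \<omega> x))\<^sup>2 \<partial>M1)"
  have lower: "(\<integral>\<omega>1. inner (F (Y \<omega>1)) e \<partial>M1) \<ge> C + (\<mu>-L)*\<gamma>\<^sup>2 * s"
  proof -
    have "(\<integral>\<omega>1. C + inner w (U1 \<omega>1 x) + (\<mu>-L)*\<gamma>\<^sup>2*(norm (U1 \<omega>1 x))\<^sup>2 \<partial>M1) \<le> (\<integral>\<omega>1. inner (F (Y \<omega>1)) e \<partial>M1)"
    proof (rule integral_mono)
      show "integrable M1 (\<lambda>\<omega>1. C + inner w (U1 \<omega>1 x) + (\<mu>-L)*\<gamma>\<^sup>2*(norm (U1 \<omega>1 x))\<^sup>2)"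
        using U1_int U1_sq_int by auto
      show "integrable M1 (\<lambda>\<omega>1. inner (F (Y \<omega>1)) e)" by (rule int1)
      fix \<omega>1
      show "C + inner w (U1 \<omega>1 x) + (\<mu>-L)*\<gamma>\<^sup>2*(norm (U1 \<omega>1 x))\<^sup>2 \<le> inner (F (Y \<omega>1)) e"
        using pointwise[OF lip weak_mon gam_pos, of x "U1 \<omega>1 x"]
        by (simp add: C_def w_def Y_def e_def)
    qed
    also have "(\<integral>\<omega>1. C + inner w (U1 \<omega>1 x) + (\<mu>-L)*\<gamma>\<^sup>2*(norm (U1 \<omega>1 x))\<^sup>2 \<partial>M1) = C + (\<mu>-L)*\<gamma>\<^sup>2 * s"
      using U1_int U1_sq_int U1_mean by (simp add: M1.prob_space s_def)
    finally show ?thesis .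
  qed
  have gl: "\<gamma> * (\<mu> + L) \<le> 1"
  proof -
    have "sqrt 3 \<ge> 1" by simp
    hence "\<mu> + L \<le> 2 * \<mu> + sqrt 3 * L" using mu L0 by (smt (verit) mult_right_mono mult_cancel_right1)
    moreover have "2 * \<mu> + sqrt 3 * L > 0" using mu L0 by (smt (verit) mult_nonneg_nonneg real_sqrt_ge_zero)
    moreover have "\<gamma> * (2 * \<mu> + sqrt 3 * L) < 1" using gam_small calculation(2) by (simp add: field_simps)
    ultimately show ?thesis using gam_pos by (smt (verit) mult_left_mono)
  qed
  have s0: "0 \<le> s" unfolding s_def by simp
  have s1: "s \<le> \<sigma>\<^sup>2" unfolding s_def using U1_var by simp
  have p: "inner e (F x) \<le> norm e * norm (F x)" by (rule norm_cauchy_schwarz)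
  have fin: "- (\<gamma> * (C + (\<mu>-L)*\<gamma>\<^sup>2 * s)) \<le> - (\<mu> * \<gamma> / 2) * (norm e)\<^sup>2 + (\<gamma> * lam + 3 * \<gamma>\<^sup>2 * \<sigma>\<^sup>2)"
    unfolding C_def
    by (rule scalar_final[OF norm_ge_zero norm_ge_zero p s0 s1 gam_pos mu L0 gl])
  have "- (\<gamma> * integral\<^sup>L (M1 \<Otimes>\<^sub>M M2) h) \<le> - (\<gamma> * (C + (\<mu>-L)*\<gamma>\<^sup>2 * s))"
    using lower gam_pos unfolding main_eq by simp
  with fin show ?thesis unfolding h_def e_def by simp
qed

end
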